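(* Let $m,k$ be natural numbers. If the hereditary representation in base $k+1$ of the $k$-th term $G(k,m)$ of the Goodstein sequence $G(m)$ contains more than one non-zero term, then $G(k+1,m)\ge G(k,m)$.
   Context: For a natural number base $b>1$, the hereditary representation $m\langle b\rangle$ of $m$ is $\sum_{i=0}^{l} a_i b^{i}$ with $0\le a_i<b$, $a_l\ne0$, each exponent itself written in hereditary representation in base $b$, recursively; its terms are the summands $a_i b^i$, and it contains more than one non-zero term if $a_i\neq0$ for at least two indices $i$. $m\langle b\rangle''$ is obtained by syntactically replacing every $b$ by $b+1$ in $m\langle b\rangle$. The Goodstein sequence $G(m)=\{m, m''-1, (m''-1)''-1,\dots\}$ starts from $m$ in base $2$; its $n$-th term is $G(n,m)$, with $G(1,m)=m$ in base $2$, $G(k,m)$ written in base $k+1$, and $G(k+1,m)=G(k,m)\langle k+1\rangle''-1$. *)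

theory Defs
  imports Main
begin

definition digit :: "nat \<Rightarrow> nat \<Rightarrow> nat \<Rightarrow> nat" where
  "digit b n i = (n div b ^ i) mod b"

text \<open>The hereditary base-b representation of n is the sum over i of a_i b^i with the
  exponents i again written hereditarily (all nonzero digits have index i < n).
  bump b n is the value of the expression obtained by replacing every b by b+1,
  i.e. the value of m<b>''.\<close>
function bump :: "nat \<Rightarrow> nat \<Rightarrow> nat" where
  "bump b n = (if b < 2 \<or> n = 0 then n
               else (\<Sum>i<n. digit b n i * (b + 1) ^ bump b i))"
  by pat_completeness auto
termination
  by (relation "measure (\<lambda>(b, n). n)") auto

definition several_terms :: "nat \<Rightarrow> nat \<Rightarrow> bool" where
  "several_terms b n \<longleftrightarrow> (\<exists>i j. i \<noteq> j \<and> digit b n i \<noteq> 0 \<and> digit b n j \<noteq> 0)"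

text \<open>Goodstein sequence, indexed from 1: G 1 m = m, and G k m is written in base k+1.\<close>
fun goodstein :: "nat \<Rightarrow> nat \<Rightarrow> nat" where
  "goodstein 0 m = m"
| "goodstein (Suc 0) m = m"
| "goodstein (Suc (Suc k)) m = bump (Suc (Suc k)) (goodstein (Suc k) m) - 1"

end

theory Submission
  imports Defs
begin

declare bump.simps[simp del]

lemma digit_mod_sum:
  "n mod b ^ N = (\<Sum>i<N. digit b n i * b ^ i)"
proof (induction N)
  case 0 then show ?case by simp
next
  case (Suc N)
  have "n mod b ^ Suc N = n mod (b ^ N * b)" by (simp add: mult.commute)
  also have "\<dots> = b ^ N * (n div b ^ N mod b) + n mod b ^ N" by (rule mod_mult2_eq)
  finally show ?case using Suc by (simp add: digit_def)
qed

lemma digit_sum: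
  assumes "b \<ge> 2" shows "n = (\<Sum>i<n. digit b n i * b ^ i)"
proof -
  have "n < b ^ n"
    using assms less_exp[of n] power_mono[of 2 b n] by linarith
  then show ?thesis using digit_mod_sum[of n b n] by simp
qed

lemma digit_idx:
  assumes "b \<ge> 2" "digit b n i \<noteq> 0" shows "i < n"
proof -
  have "n div b ^ i \<noteq> 0" using assms(2) by (auto simp: digit_def intro: ccontr)
  then have "b ^ i \<le> n" by (simp add: div_eq_0_iff)
  moreover have "i < b ^ i"
    using assms less_exp[of i] power_mono[of 2 b i] by linarith
  ultimately show ?thesis by linarith
qed

lemma bump_ge:
  assumes "b \<ge> 2" shows "n \<le> bump b n"
proof (induction n rule: less_induct)
  case (less n)
  show ?case
  proof (cases "n = 0")
    case True then show ?thesis by simp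
  next
    case False
    have "n = (\<Sum>i<n. digit b n i * b ^ i)" using digit_sum[OF assms] .
    also have "\<dots> \<le> (\<Sum>i<n. digit b n i * (b + 1) ^ bump b i)"
    proof (rule sum_mono)
      fix i assume "i \<in> {..<n}"
      then have "i \<le> bump b i" using less by auto
      then have "b ^ i \<le> (b + 1) ^ bump b i"
        using assms power_increasing[of i "bump b i" "b+1"] power_mono[of b "b+1" i] by linarith
      then show "digit b n i * b ^ i \<le> digit b n i * (b + 1) ^ bump b i" by simp
    qed
    also have "\<dots> = bump b n" using assms False by (subst (2) bump.simps) simp
    finally show ?thesis .
  qed
qed

lemma bump_gt:
  assumes "b \<ge> 2" "several_terms b n" shows "n < bump b n"
proof -
  obtain i j where ij: "i \<noteq> j" "digit b n i \<noteq> 0" "digit b n j \<noteq> 0"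
    using assms(2) by (auto simp: several_terms_def)
  obtain a where a: "a \<noteq> 0" "digit b n a \<noteq> 0" using ij by (cases "i = 0") auto
  have an: "a < n" using digit_idx[OF assms(1) a(2)] .
  then have n0: "n \<noteq> 0" by simp
  have "n = (\<Sum>i<n. digit b n i * b ^ i)" using digit_sum[OF assms(1)] .
  also have "\<dots> < (\<Sum>i<n. digit b n i * (b + 1) ^ bump b i)"
  proof (rule sum_strict_mono_ex1)
    show "finite {..<n}" by simp
    show "\<forall>i\<in>{..<n}. digit b n i * b ^ i \<le> digit b n i * (b + 1) ^ bump b i"
    proof
      fix i assume "i \<in> {..<n}"
      have "i \<le> bump b i" using bump_ge[OF assms(1)] .
      then have "b ^ i \<le> (b + 1) ^ bump b i"
        using assms power_increasing[of i "bump b i" "b+1"] power_mono[of b "b+1" i] by linarith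
      then show "digit b n i * b ^ i \<le> digit b n i * (b + 1) ^ bump b i" by simp
    qed
    have "a \<le> bump b a" using bump_ge[OF assms(1)] .
    moreover have "b ^ a < (b + 1) ^ a" using a(1) by (intro power_strict_mono) auto
    ultimately have "b ^ a < (b + 1) ^ bump b a"
      using power_increasing[of a "bump b a" "b+1"] by linarith
    then have "digit b n a * b ^ a < digit b n a * (b + 1) ^ bump b a" using a(2) by simp
    then show "\<exists>i\<in>{..<n}. digit b n i * b ^ i < digit b n i * (b + 1) ^ bump b i"
      using an by blast
  qed
  also have "\<dots> = bump b n" using assms n0 by (subst (2) bump.simps) simp
  finally show ?thesis .
qed

theorem lemma2:
  fixes m k :: nat
  assumes "k \<ge> 1"
    and "several_terms (k + 1) (goodstein k m)"
  shows "goodstein (k + 1) m \<ge> goodstein k m"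
proof -
  obtain k' where k: "k = Suc k'" using assms(1) by (cases k) auto
  have "goodstein (k + 1) m = bump (k + 1) (goodstein k m) - 1"
    using k by simp
  moreover have "goodstein k m < bump (k + 1) (goodstein k m)"
    using bump_gt[OF _ assms(2)] k by simp
  ultimately show ?thesis by simp
qed

end
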